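(* In the FJ-FA system (defined in the context) with Poisson arrival rate $\lambda < (t+1)\mu$, the steady-state download time satisfies $\Pr\{T_{\text{FJ-FA}} > x\} \ge \exp\!\big(-((t+1)\mu - \lambda)x\big)$ for all $x \ge 0$.
   Context: Storage model: objects are encoded by a systematic linear code with $(r,t)$-availability: each systematic server has $t$ pairwise disjoint recovery groups of $r$ servers from any one of which its object can be recovered. FJ-FA system: requests arrive as a Poisson process of rate $\lambda$ and every request asks for the same object; each request is replicated into one copy at the object's systematic server and one copy at each of its $t$ recovery groups; a recovery-group copy is forked into $r$ sub-copies (one per server of the group) and completes when all finish; the request completes when its systematic copy finishes or some recovery-group copy completes, and then all its outstanding copies/sub-copies are removed immediately. Each server has a FCFS queue and serves one sub-copy at a time; service times are independent, each $\mathrm{Exp}(\mu)$. Download time is departure minus arrival time, in steady state. *)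

theory Defs
  imports "HOL-Probability.Probability"
begin

(* Servers: None = the systematic server; Some (g,j) = j-th server (1..r) of
   recovery group g (1..t).  A request in the system is represented by the set
   of its recovery-group sub-copies (g,j) that have already finished.
   A system state is the list of requests present, oldest first (FCFS). *)

type_synonym req = "(nat \<times> nat) set"
type_synonym state = "req list"
type_synonym server = "(nat \<times> nat) option"

definition grid :: "nat \<Rightarrow> nat \<Rightarrow> (nat \<times> nat) set" where
  "grid t r = {1..t} \<times> {1..r}"

definition servers :: "nat \<Rightarrow> nat \<Rightarrow> server set" where
  "servers t r = insert None (Some ` grid t r)"

definition group_done :: "nat \<Rightarrow> nat \<Rightarrow> req \<Rightarrow> bool" where
  "group_done r g y \<longleftrightarrow> {g} \<times> {1..r} \<subseteq> y"

definition valid_req :: "nat \<Rightarrow> nat \<Rightarrow> req \<Rightarrow> bool" where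
  "valid_req t r y \<longleftrightarrow> y \<subseteq> grid t r \<and> (\<forall>g\<in>{1..t}. \<not> group_done r g y)"

definition valid_states :: "nat \<Rightarrow> nat \<Rightarrow> state set" where
  "valid_states t r = {xs. \<forall>y\<in>set xs. valid_req t r y}"

definition first_waiting :: "nat \<times> nat \<Rightarrow> state \<Rightarrow> nat option" where
  "first_waiting p xs =
     (if \<exists>i<length xs. p \<notin> xs ! i
      then Some (LEAST i. i < length xs \<and> p \<notin> xs ! i) else None)"

definition departs :: "nat \<Rightarrow> server \<Rightarrow> state \<Rightarrow> nat option" where
  "departs r v xs =
     (case v of
        None \<Rightarrow> (if xs = [] then None else Some 0)
      | Some p \<Rightarrow> (case first_waiting p xs of
                     None \<Rightarrow> None
                   | Some i \<Rightarrow> (if group_done r (fst p) (insert p (xs ! i))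
                                then Some i else None)))"

definition serve :: "nat \<Rightarrow> server \<Rightarrow> state \<Rightarrow> state" where
  "serve r v xs =
     (case v of
        None \<Rightarrow> (if xs = [] then [] else tl xs)
      | Some p \<Rightarrow> (case first_waiting p xs of
                     None \<Rightarrow> xs
                   | Some i \<Rightarrow> (let y = insert p (xs ! i) in
                                if group_done r (fst p) y
                                then take i xs @ drop (Suc i) xs
                                else xs[i := y])))"

(* Uniformised jump kernel of the full FJ-FA CTMC: total event rate
   lam + (1 + t*r)*mu; arrival w.p. lam/total, otherwise a uniformly chosen
   server (each with rate mu) completes a service (self-loop if idle). *)
definition full_step :: "real \<Rightarrow> real \<Rightarrow> nat \<Rightarrow> nat \<Rightarrow> state \<Rightarrow> state pmf" where
  "full_step lam mu t r xs =
     bind_pmf (bernoulli_pmf (lam / (lam + mu * real (1 + t * r))))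
       (\<lambda>a. if a then return_pmf (xs @ [{}])
            else map_pmf (\<lambda>v. serve r v xs) (pmf_of_set (servers t r)))"

(* stationary (steady-state) distribution: global balance pi Q = 0,
   equivalently invariance under the uniformised kernel *)
definition stationary :: "real \<Rightarrow> real \<Rightarrow> nat \<Rightarrow> nat \<Rightarrow> state pmf \<Rightarrow> bool" where
  "stationary lam mu t r \<pi> \<longleftrightarrow> bind_pmf \<pi> (full_step lam mu t r) = \<pi>"

(* Tagged request: it is the last element of the list; requests arriving after
   it never affect it (FCFS everywhere), so they are omitted.  None = the
   tagged request has departed (absorbing). *)
definition tag_step :: "nat \<Rightarrow> server \<Rightarrow> state option \<Rightarrow> state option" where
  "tag_step r v s =
     (case s of
        None \<Rightarrow> None
      | Some xs \<Rightarrow> (if departs r v xs = Some (length xs - 1) then None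
                    else Some (serve r v xs)))"

definition tag_kernel :: "nat \<Rightarrow> nat \<Rightarrow> state option \<Rightarrow> state option pmf" where
  "tag_kernel t r s = map_pmf (\<lambda>v. tag_step r v s) (pmf_of_set (servers t r))"

definition tag_iter :: "nat \<Rightarrow> nat \<Rightarrow> nat \<Rightarrow> state option \<Rightarrow> state option pmf" where
  "tag_iter t r k s = ((\<lambda>p. bind_pmf p (tag_kernel t r)) ^^ k) (return_pmf s)"

(* P{T > x} for a request that finds the system in state xs on arrival,
   computed by uniformisation at rate (1 + t*r)*mu *)
definition tag_survival :: "real \<Rightarrow> nat \<Rightarrow> nat \<Rightarrow> state \<Rightarrow> real \<Rightarrow> real" where
  "tag_survival mu t r xs x =
     (let L = mu * real (1 + t * r) in
      \<Sum>k. exp (- L * x) * (L * x) ^ k / fact k *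
           measure_pmf.prob (tag_iter t r k (Some (xs @ [{}]))) (range Some))"

(* steady-state download time tail: by PASTA an arrival sees the stationary law *)
definition download_tail :: "real \<Rightarrow> nat \<Rightarrow> nat \<Rightarrow> state pmf \<Rightarrow> real \<Rightarrow> real" where
  "download_tail mu t r \<pi> x = measure_pmf.expectation \<pi> (\<lambda>xs. tag_survival mu t r xs x)"

end

theory Submission
  imports Defs
begin

definition good :: "state \<Rightarrow> bool" where
  "good xs \<longleftrightarrow> sorted_wrt (\<lambda>a b. b \<subseteq> a) xs"

lemma good_nth: "good xs \<Longrightarrow> i < j \<Longrightarrow> j < length xs \<Longrightarrow> xs ! j \<subseteq> xs ! i"
  unfolding good_def by (simp add: sorted_wrt_iff_nth_less)

lemma good_snoc: "good xs \<Longrightarrow> good (xs @ [{}])"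
  unfolding good_def by (simp add: sorted_wrt_append)

lemma good_drop: "good xs \<Longrightarrow> good (drop k xs)"
  unfolding good_def by (simp add: sorted_wrt_drop)

lemma good_tl: "good xs \<Longrightarrow> good (tl xs)"
  using good_drop[of xs 1] by (simp add: drop_Suc)

lemma good_remove: "good xs \<Longrightarrow> good (take i xs @ drop (Suc i) xs)"
proof -
  assume g: "good xs"
  have "sorted_wrt (\<lambda>a b. b \<subseteq> a) (take i xs @ drop i xs)" using g unfolding good_def by simp
  then have 1: "sorted_wrt (\<lambda>a b. b \<subseteq> a) (take i xs)" "sorted_wrt (\<lambda>a b. b \<subseteq> a) (drop i xs)"
    and 2: "\<forall>x\<in>set (take i xs). \<forall>y\<in>set (drop i xs). y \<subseteq> x"
    unfolding sorted_wrt_append by auto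
  have 3: "set (drop (Suc i) xs) \<subseteq> set (drop i xs)" by (simp add: set_drop_subset_set_drop)
  have 4: "sorted_wrt (\<lambda>a b. b \<subseteq> a) (drop (Suc i) xs)" using g unfolding good_def by (simp add: sorted_wrt_drop)
  show ?thesis unfolding good_def sorted_wrt_append using 1 2 3 4 by blast
qed

lemma good_update:
  assumes "good xs" "i < length xs" "\<forall>j<i. p \<in> xs ! j"
  shows "good (xs[i := insert p (xs ! i)])"
  unfolding good_def sorted_wrt_iff_nth_less
proof (intro allI impI)
  fix a b assume ab: "a < b" "b < length (xs[i := insert p (xs ! i)])"
  show "xs[i := insert p (xs ! i)] ! b \<subseteq> xs[i := insert p (xs ! i)] ! a"
    using ab assms good_nth[OF assms(1), of a b] good_nth[OF assms(1), of a i]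
    by (auto simp: nth_list_update)
qed

lemma first_waiting_SomeD:
  assumes "first_waiting p xs = Some i"
  shows "i < length xs" "p \<notin> xs ! i" "\<And>j. j < i \<Longrightarrow> p \<in> xs ! j"
proof -
  have ex: "\<exists>i<length xs. p \<notin> xs ! i" and i: "i = (LEAST i. i < length xs \<and> p \<notin> xs ! i)"
    using assms unfolding first_waiting_def by (auto split: if_splits)
  from ex obtain k where k: "k < length xs \<and> p \<notin> xs ! k" by blast
  show "i < length xs" "p \<notin> xs ! i" using LeastI[of "\<lambda>i. i < length xs \<and> p \<notin> xs ! i", OF k] i by auto
  fix j assume "j < i"
  then show "p \<in> xs ! j" using not_less_Least[of j "\<lambda>i. i < length xs \<and> p \<notin> xs ! i"] i
    \<open>i < length xs\<close> by auto
qed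

lemma first_waiting_None: "first_waiting p xs = None \<Longrightarrow> \<forall>i<length xs. p \<in> xs ! i"
  unfolding first_waiting_def by (auto split: if_splits)

lemma length_serve:
  "length (serve r v xs) = length xs - (if departs r v xs = None then 0 else 1)"
  unfolding serve_def departs_def
  by (auto simp: Let_def min_def dest: first_waiting_SomeD split: option.splits)

lemma departs_lt: "departs r v xs = Some i \<Longrightarrow> i < length xs"
  unfolding departs_def
  by (auto dest: first_waiting_SomeD split: option.splits if_splits)

lemma good_serve: "good xs \<Longrightarrow> good (serve r v xs)"
  unfolding serve_def
  by (auto simp: Let_def good_tl good_remove intro!: good_update
      dest: first_waiting_SomeD split: option.splits)

definition bpot :: "state \<Rightarrow> nat" where
  "bpot xs = (LEAST k. good (drop k xs))"

lemma bpot_good: "good (drop (bpot xs) xs)"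
  unfolding bpot_def by (rule LeastI[of _ "length xs"]) (simp add: good_def)

lemma bpot_le: "good (drop k xs) \<Longrightarrow> bpot xs \<le> k"
  unfolding bpot_def by (rule Least_le)

lemma bpot_le_len: "bpot xs \<le> length xs"
  by (rule bpot_le) (simp add: good_def)

lemma bpot_0_iff: "bpot xs = 0 \<longleftrightarrow> good xs"
  using bpot_good[of xs] bpot_le[of 0 xs] by auto

lemma bpot_snoc: "bpot (xs @ [{}]) \<le> bpot xs"
  using bpot_good[of xs] bpot_le_len[of xs]
  by (intro bpot_le) (simp add: good_snoc)

lemma bpot_serve_None: "xs \<noteq> [] \<Longrightarrow> bpot xs \<ge> 1 \<Longrightarrow> bpot (serve r None xs) < bpot xs"
proof -
  assume "xs \<noteq> []" "bpot xs \<ge> 1"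
  have "drop (bpot xs - 1) (tl xs) = drop (bpot xs) xs" using \<open>bpot xs \<ge> 1\<close>
    by (cases "bpot xs") (simp_all add: drop_Suc)
  then have "bpot (tl xs) \<le> bpot xs - 1" using bpot_good[of xs] by (intro bpot_le) simp
  then show ?thesis using \<open>xs \<noteq> []\<close> \<open>bpot xs \<ge> 1\<close> by (simp add: serve_def)
qed

lemma bpot_serve: "bpot (serve r v xs) \<le> bpot xs"
proof (cases v)
  case None
  have "good (drop (bpot xs) (tl xs))" using good_tl[OF bpot_good[of xs]] by (simp add: drop_tl)
  then show ?thesis using None by (auto simp: serve_def intro: bpot_le)
next
  case (Some p)
  define k where "k = bpot xs"
  have gk: "good (drop k xs)" unfolding k_def by (rule bpot_good)
  show ?thesis
  proof (cases "first_waiting p xs")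
    case None then show ?thesis using Some by (simp add: serve_def)
  next
    case (Some i)
    note fw = first_waiting_SomeD[OF Some]
    define y where "y = insert p (xs ! i)"
    show ?thesis
    proof (cases "group_done r (fst p) y")
      case True
      then have s: "serve r v xs = take i xs @ drop (Suc i) xs"
        using \<open>v = Some p\<close> Some by (simp add: serve_def y_def Let_def)
      show ?thesis
      proof (cases "i < k")
        case True
        have "drop (k - 1) (take i xs @ drop (Suc i) xs) = drop k xs"
          using True fw(1) by (simp add: min_def)
        then have "bpot (serve r v xs) \<le> k - 1" using gk s by (intro bpot_le) simp
        then show ?thesis unfolding k_def by simp
      next
        case False
        have "drop k (take i xs @ drop (Suc i) xs) = take (i - k) (drop k xs) @ drop (Suc (i - k)) (drop k xs)"
          using False fw(1) by (simp add: min_def Suc_diff_le drop_take)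
        then have "good (drop k (serve r v xs))" using good_remove[OF gk, of "i-k"] s by simp
        then show ?thesis unfolding k_def by (rule bpot_le)
      qed
    next
      case False
      then have s: "serve r v xs = xs[i := y]"
        using \<open>v = Some p\<close> Some by (simp add: serve_def y_def Let_def)
      show ?thesis
      proof (cases "i < k")
        case True
        then show ?thesis using s gk unfolding k_def by (intro bpot_le) simp
      next
        case False
        have d: "drop k (xs[i := y]) = (drop k xs)[i - k := insert p (drop k xs ! (i - k))]"
          using False fw(1) by (simp add: drop_update_swap y_def)
        have "good ((drop k xs)[i - k := insert p (drop k xs ! (i - k))])"
          using False fw by (intro good_update[OF gk]) auto
        then show ?thesis using s d unfolding k_def by (intro bpot_le) simp
      qed
    qed
  qed
qed

lemma finite_servers: "finite (servers t r)"
  unfolding servers_def grid_def by simp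

lemma servers_ne: "servers t r \<noteq> {}"
  unfolding servers_def by simp

lemma card_servers: "card (servers t r) = 1 + t * r"
proof -
  have "card (Some ` grid t r) = t * r"
    by (simp add: card_image grid_def card_cartesian_product)
  then show ?thesis unfolding servers_def by (simp add: grid_def)
qed

lemma valid_states_iff: "xs \<in> valid_states t r \<longleftrightarrow> (\<forall>y\<in>set xs. valid_req t r y)"
  unfolding valid_states_def by simp

lemma valid_snoc: "r \<ge> 1 \<Longrightarrow> xs \<in> valid_states t r \<Longrightarrow> xs @ [{}] \<in> valid_states t r"
  unfolding valid_states_iff valid_req_def group_done_def by auto

lemma valid_serve:
  assumes v: "v \<in> servers t r" and xs: "xs \<in> valid_states t r"
  shows "serve r v xs \<in> valid_states t r"
proof (cases v)
  case None
  then show ?thesis using xs unfolding valid_states_iff serve_def by (auto dest: list.set_sel(2))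
next
  case (Some p)
  have p: "p \<in> grid t r" using v Some unfolding servers_def by auto
  show ?thesis
  proof (cases "first_waiting p xs")
    case None then show ?thesis using Some xs by (simp add: serve_def)
  next
    case (Some i)
    note fw = first_waiting_SomeD[OF Some]
    define y where "y = insert p (xs ! i)"
    show ?thesis
    proof (cases "group_done r (fst p) y")
      case True
      then have s: "serve r v xs = take i xs @ drop (Suc i) xs"
        using \<open>v = Some p\<close> Some by (simp add: serve_def y_def Let_def)
      show ?thesis using xs unfolding s valid_states_iff
        by (auto dest: in_set_takeD in_set_dropD)
    next
      case False
      then have s: "serve r v xs = xs[i := y]"
        using \<open>v = Some p\<close> Some by (simp add: serve_def y_def Let_def)
      have xi: "valid_req t r (xs ! i)" using xs fw(1) unfolding valid_states_iff by simp
      have "valid_req t r y"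
        unfolding valid_req_def
      proof (intro conjI ballI)
        show "y \<subseteq> grid t r" using xi p unfolding y_def valid_req_def by auto
        fix g assume g: "g \<in> {1..t}"
        show "\<not> group_done r g y"
        proof (cases "g = fst p")
          case True then show ?thesis using False by simp
        next
          case ne: False
          have "group_done r g y \<Longrightarrow> group_done r g (xs ! i)"
            unfolding group_done_def y_def using ne by auto
          then show ?thesis using xi g unfolding valid_req_def by auto
        qed
      qed
      then show ?thesis using xs unfolding s valid_states_iff
        by (auto dest: set_update_subset_insert[THEN subsetD])
    qed
  qed
qed

lemma departs_SomeD:
  assumes "departs r (Some p) xs = Some i"
  shows "first_waiting p xs = Some i" "group_done r (fst p) (insert p (xs ! i))"
  using assms unfolding departs_def by (auto split: option.splits if_splits)

lemma card_departs:
  assumes g: "good xs"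
  shows "card {v \<in> servers t r. departs r v xs \<noteq> None} \<le> t + 1"
proof -
  define D' where "D' = {p \<in> grid t r. departs r (Some p) xs \<noteq> None}"
  have sub: "{v \<in> servers t r. departs r v xs \<noteq> None} \<subseteq> insert None (Some ` D')"
    unfolding servers_def D'_def by auto
  have inj: "inj_on fst D'"
  proof (rule inj_onI)
    fix p1 p2 assume p1: "p1 \<in> D'" and p2: "p2 \<in> D'" and eq: "fst p1 = fst p2"
    show "p1 = p2"
    proof (rule ccontr)
      assume ne: "p1 \<noteq> p2"
      obtain g j1 j2 where pp: "p1 = (g, j1)" "p2 = (g, j2)" using eq by (cases p1, cases p2) auto
      have j: "j1 \<in> {1..r}" "j2 \<in> {1..r}" using p1 p2 pp unfolding D'_def grid_def by auto
      obtain i1 where d1: "departs r (Some p1) xs = Some i1" using p1 unfolding D'_def by auto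
      obtain i2 where d2: "departs r (Some p2) xs = Some i2" using p2 unfolding D'_def by auto
      note f1 = first_waiting_SomeD[OF departs_SomeD(1)[OF d1]]
      note f2 = first_waiting_SomeD[OF departs_SomeD(1)[OF d2]]
      note gd1 = departs_SomeD(2)[OF d1] and gd2 = departs_SomeD(2)[OF d2]
      have "(g, j2) \<in> {g} \<times> {1..r}" using j by simp
      moreover have "{g} \<times> {1..r} \<subseteq> insert (g, j1) (xs ! i1)" using gd1 pp unfolding group_done_def by simp
      ultimately have "(g, j2) \<in> insert (g, j1) (xs ! i1)" by (rule rev_subsetD)
      then have a: "p2 \<in> xs ! i1" using ne pp by auto
      have "(g, j1) \<in> {g} \<times> {1..r}" using j by simp
      moreover have "{g} \<times> {1..r} \<subseteq> insert (g, j2) (xs ! i2)" using gd2 pp unfolding group_done_def by simp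
      ultimately have "(g, j1) \<in> insert (g, j2) (xs ! i2)" by (rule rev_subsetD)
      then have b: "p1 \<in> xs ! i2" using ne pp by auto
      consider "i1 < i2" | "i1 = i2" | "i2 < i1" by linarith
      then show False
      proof cases
        case 1 then show False using good_nth[OF g 1 f2(1)] b f1(2) by auto
      next
        case 2 then show False using a f2(2) by simp
      next
        case 3 then show False using good_nth[OF g 3 f1(1)] a f2(2) by auto
      qed
    qed
  qed
  have fD': "finite D'" unfolding D'_def grid_def by simp
  have "fst ` D' \<subseteq> {1..t}" unfolding D'_def grid_def by auto
  then have "card (fst ` D') \<le> card {1..t}" by (intro card_mono) simp_all
  then have cD': "card D' \<le> t" using card_image[OF inj] by simp
  have "card (insert None (Some ` D')) = Suc (card D')" using fD' by (simp add: card_image)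
  then have "card (insert None (Some ` D')) \<le> t + 1" using cD' by simp
  moreover have "card {v \<in> servers t r. departs r v xs \<noteq> None} \<le> card (insert None (Some ` D'))"
    using fD' sub by (intro card_mono) simp_all
  ultimately show ?thesis by linarith
qed

lemma tag_head:
  assumes g: "good xs" and val: "xs \<in> valid_states t r" and v: "v \<in> servers t r"
    and d: "departs r v xs = Some (length xs - 1)"
  shows "length xs = 1"
proof (rule ccontr)
  assume ne1: "length xs \<noteq> 1"
  have lt: "length xs - 1 < length xs" using departs_lt[OF d] .
  then have m2: "length xs \<ge> 2" using ne1 by linarith
  show False
  proof (cases v)
    case None
    then have "departs r v xs = Some 0" using m2 unfolding departs_def by auto
    then show False using d m2 by simp
  next
    case (Some p)
    have p: "p \<in> grid t r" using v Some unfolding servers_def by auto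
    have d': "departs r (Some p) xs = Some (length xs - 1)" using d Some by simp
    note fw = departs_SomeD(1)[OF d'] and gd = departs_SomeD(2)[OF d']
    have p0: "p \<in> xs ! 0" using first_waiting_SomeD(3)[OF fw, of 0] m2 by simp
    have "xs ! (length xs - 1) \<subseteq> xs ! 0" using good_nth[OF g, of 0 "length xs - 1"] m2 by simp
    then have "insert p (xs ! (length xs - 1)) \<subseteq> xs ! 0" using p0 by simp
    then have gd0: "group_done r (fst p) (xs ! 0)" using gd unfolding group_done_def by (rule_tac subset_trans)
    have "0 < length xs" using m2 by linarith
    then have "xs ! 0 \<in> set xs" by (rule nth_mem)
    then have "valid_req t r (xs ! 0)" using val unfolding valid_states_iff by blast
    then have "\<forall>g\<in>{1..t}. \<not> group_done r g (xs ! 0)" unfolding valid_req_def by simp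
    then have "fst p \<notin> {1..t}" using gd0 by blast
    moreover have "fst p \<in> {1..t}" using p unfolding grid_def by auto
    ultimately show False by blast
  qed
qed

lemma pmf_integrable_bounded:
  fixes f :: "'a \<Rightarrow> real"
  assumes "\<And>x. \<bar>f x\<bar> \<le> B"
  shows "integrable (measure_pmf M) f"
  by (rule measure_pmf.integrable_const_bound[where B=B]) (use assms in auto)

lemma pmf_expectation_indicator:
  "measure_pmf.expectation M (indicator A :: _ \<Rightarrow> real) = measure_pmf.prob M A"
  by (simp add: measure_pmf.emeasure_eq_measure)

lemma prob_bind_pmf:
  "measure_pmf.prob (bind_pmf M N) A = measure_pmf.expectation M (\<lambda>x. measure_pmf.prob (N x) A)"
proof -
  have int: "integrable (measure_pmf M) (\<lambda>x. measure_pmf.prob (N x) A)"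
    by (rule pmf_integrable_bounded[where B=1]) simp
  have "ennreal (measure_pmf.prob (bind_pmf M N) A) = emeasure (bind_pmf M N) A"
    by (simp add: measure_pmf.emeasure_eq_measure)
  also have "\<dots> = (\<integral>\<^sup>+x. emeasure (N x) A \<partial>M)" by simp
  also have "\<dots> = (\<integral>\<^sup>+x. ennreal (measure_pmf.prob (N x) A) \<partial>M)"
    by (simp add: measure_pmf.emeasure_eq_measure)
  also have "\<dots> = ennreal (measure_pmf.expectation M (\<lambda>x. measure_pmf.prob (N x) A))"
    by (rule nn_integral_eq_integral[OF int]) simp
  finally show ?thesis by (simp add: integral_nonneg_AE)
qed

lemma pmf_nat_sums:
  fixes P :: "nat pmf" and f :: "nat \<Rightarrow> real"
  assumes B: "\<And>n. \<bar>f n\<bar> \<le> B"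
  shows "(\<lambda>n. pmf P n * f n) sums (measure_pmf.expectation P f)"
proof -
  have intP: "integrable (measure_pmf P) f" by (rule pmf_integrable_bounded[OF B])
  have "integrable (density (count_space UNIV) (pmf P)) f"
    using intP by (simp add: measure_pmf_eq_density)
  then have "integrable (count_space UNIV) (\<lambda>x. pmf P x *\<^sub>R f x)"
    by (subst (asm) integrable_density) auto
  then have "(\<lambda>x. pmf P x *\<^sub>R f x) sums (integral\<^sup>L (count_space UNIV) (\<lambda>x. pmf P x *\<^sub>R f x))"
    by (rule sums_integral_count_space_nat)
  moreover have "measure_pmf.expectation P f = integral\<^sup>L (count_space UNIV) (\<lambda>x. pmf P x *\<^sub>R f x)"
    by (simp add: measure_pmf_eq_density integral_density)
  ultimately show ?thesis by simp
qed

lemma shift_ineq: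
  fixes P :: "nat pmf" and h :: "nat \<Rightarrow> real" and \<rho> :: real
  assumes B: "\<And>n. \<bar>h n\<bar> \<le> B" and h0: "h 0 = 0" and hnn: "\<And>n. h n \<ge> 0"
    and \<rho>: "\<rho> \<ge> 0" and rec: "\<And>n. \<rho> * pmf P n \<le> pmf P (Suc n)"
  shows "\<rho> * measure_pmf.expectation P (\<lambda>n. h (Suc n)) \<le> measure_pmf.expectation P h"
proof -
  have s1: "(\<lambda>n. pmf P n * h (Suc n)) sums (measure_pmf.expectation P (\<lambda>n. h (Suc n)))"
    by (rule pmf_nat_sums) (use B in auto)
  have s2: "(\<lambda>n. pmf P n * h n) sums (measure_pmf.expectation P h)"
    by (rule pmf_nat_sums[OF B])
  then have s2': "(\<lambda>n. pmf P (Suc n) * h (Suc n)) sums (measure_pmf.expectation P h)"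
    using sums_Suc_iff[of "\<lambda>n. pmf P n * h n"] h0 by simp
  have s3: "(\<lambda>n. \<rho> * (pmf P n * h (Suc n))) sums (\<rho> * measure_pmf.expectation P (\<lambda>n. h (Suc n)))"
    by (rule sums_mult[OF s1])
  have le: "\<And>n. \<rho> * (pmf P n * h (Suc n)) \<le> pmf P (Suc n) * h (Suc n)"
    using rec hnn by (simp add: mult.assoc[symmetric] mult_right_mono)
  show ?thesis using sums_le[OF le s3 s2'] .
qed

definition alph :: "real \<Rightarrow> real \<Rightarrow> nat \<Rightarrow> nat \<Rightarrow> real" where
  "alph lam mu t r = lam / (lam + mu * real (1 + t * r))"

lemma alph_bounds: "lam > 0 \<Longrightarrow> mu > 0 \<Longrightarrow> 0 < alph lam mu t r \<and> alph lam mu t r < 1"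
proof -
  assume lam: "lam > 0" and mu: "mu > 0"
  have "(0::real) < real (1 + t * r)" by (simp only: of_nat_0_less_iff)
  then have "mu * real (1 + t * r) > 0" using mu by (rule_tac mult_pos_pos)
  then have d: "lam < lam + mu * real (1 + t * r)" by linarith
  then show ?thesis unfolding alph_def using lam by (auto simp: divide_less_eq)
qed

lemma prob_full_step:
  assumes "lam > 0" "mu > 0"
  shows "measure_pmf.prob (full_step lam mu t r xs) A =
    alph lam mu t r * indicator A (xs @ [{}]) +
    (1 - alph lam mu t r) * (real (card {v \<in> servers t r. serve r v xs \<in> A}) / real (card (servers t r)))"
proof -
  have a: "0 \<le> alph lam mu t r" "alph lam mu t r \<le> 1" using alph_bounds[OF assms, of t r] by auto
  have "measure_pmf.prob (map_pmf (\<lambda>v. serve r v xs) (pmf_of_set (servers t r))) A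
      = real (card {v \<in> servers t r. serve r v xs \<in> A}) / real (card (servers t r))"
    by (simp add: measure_pmf_of_set[OF servers_ne finite_servers] vimage_def Int_def)
  moreover have "measure_pmf.expectation (bernoulli_pmf (alph lam mu t r))
         (\<lambda>x. measure_pmf.prob (if x then return_pmf (xs @ [{}])
               else map_pmf (\<lambda>v. serve r v xs) (pmf_of_set (servers t r))) A)
     = measure_pmf.prob (return_pmf (xs @ [{}])) A * alph lam mu t r
       + measure_pmf.prob (map_pmf (\<lambda>v. serve r v xs) (pmf_of_set (servers t r))) A * (1 - alph lam mu t r)"
    by (subst integral_bernoulli_pmf[OF a]) simp
  ultimately show ?thesis
    unfolding full_step_def prob_bind_pmf alph_def[symmetric] by (simp only:) (simp add: mult.commute)
qed

lemma stationary_prob: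
  assumes "stationary lam mu t r \<pi>"
  shows "measure_pmf.prob \<pi> A = measure_pmf.expectation \<pi> (\<lambda>s. measure_pmf.prob (full_step lam mu t r s) A)"
proof -
  have "measure_pmf.prob \<pi> A = measure_pmf.prob (bind_pmf \<pi> (full_step lam mu t r)) A"
    using assms unfolding stationary_def by simp
  then show ?thesis by (simp add: prob_bind_pmf)
qed

lemma expectation_ind2:
  fixes c1 c2 :: real
  shows "measure_pmf.expectation M (\<lambda>s. c1 * indicator A s + c2 * indicator B s)
    = c1 * measure_pmf.prob M A + c2 * measure_pmf.prob M B"
proof -
  have i1: "integrable (measure_pmf M) (\<lambda>s. c1 * indicator A s :: real)"
    by (rule pmf_integrable_bounded[where B="\<bar>c1\<bar>"]) (simp add: abs_mult indicator_def)
  have i2: "integrable (measure_pmf M) (\<lambda>s. c2 * indicator B s :: real)"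
    by (rule pmf_integrable_bounded[where B="\<bar>c2\<bar>"]) (simp add: abs_mult indicator_def)
  show ?thesis
    by (simp add: Bochner_Integration.integral_add[OF i1 i2] pmf_expectation_indicator)
qed

lemma card_servers_real: "real (card (servers t r)) = 1 + real t * real r"
  by (simp add: card_servers)

lemma stationary_good:
  assumes lam: "lam > 0" and mu: "mu > 0" and st: "stationary lam mu t r \<pi>"
  shows "\<forall>s\<in>set_pmf \<pi>. good s"
proof -
  define \<alpha> where "\<alpha> = alph lam mu t r"
  define S where "S = servers t r"
  define nS where "nS = real (card S)"
  have a: "0 < \<alpha>" "\<alpha> < 1" using alph_bounds[OF lam mu] unfolding \<alpha>_def by auto
  have nS: "nS \<ge> 1" unfolding nS_def S_def card_servers_real by simp
  define \<delta> where "\<delta> = (1 - \<alpha>) / nS"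
  have \<delta>: "\<delta> > 0" unfolding \<delta>_def using a nS by simp
  have zero: "measure_pmf.prob \<pi> {s. bpot s = k} = 0" if k: "k \<ge> 1" for k
  proof -
    define Ak where "Ak = {s. k \<le> bpot s}"
    define A' where "A' = {s. Suc k \<le> bpot s}"
    define Ek where "Ek = {s. bpot s = k}"
    have pw: "measure_pmf.prob (full_step lam mu t r s) Ak \<le> 1 * indicator A' s + (1 - \<delta>) * indicator Ek s" for s
    proof -
      define C where "C = {v \<in> S. serve r v s \<in> Ak}"
      have fC: "finite C" "C \<subseteq> S" unfolding C_def S_def using finite_servers by auto
      have eq: "measure_pmf.prob (full_step lam mu t r s) Ak = \<alpha> * indicator Ak (s @ [{}]) + (1 - \<alpha>) * (real (card C) / nS)"
        unfolding prob_full_step[OF lam mu] \<alpha>_def C_def S_def nS_def by simp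
      consider "bpot s < k" | "bpot s = k" | "bpot s \<ge> Suc k" by linarith
      then show ?thesis
      proof cases
        case 1
        have "s @ [{}] \<notin> Ak" using bpot_snoc[of s] 1 unfolding Ak_def by simp
        moreover have "C = {}" unfolding C_def Ak_def using 1 by (auto simp: not_le intro: le_less_trans[OF bpot_serve])
        ultimately show ?thesis using eq 1 unfolding A'_def Ek_def by simp
      next
        case 2
        have "s \<noteq> []" using bpot_le_len[of s] 2 k by auto
        then have "serve r None s \<notin> Ak" using bpot_serve_None[of s r] 2 k unfolding Ak_def by simp
        then have "C \<subseteq> S - {None}" using fC unfolding C_def by auto
        then have "card C \<le> card (S - {None})" using finite_servers unfolding S_def by (intro card_mono) auto
        also have "card (S - {None}) = card S - 1" by (rule card_Diff_singleton) (simp add: S_def servers_def)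
        finally have "card C + 1 \<le> card S" using card_servers[of t r] unfolding S_def by simp
        then have "real (card C) + 1 \<le> real (card S)" using of_nat_le_iff[of "card C + 1" "card S", where 'a=real] by simp
        then have "real (card C) \<le> nS - 1" unfolding nS_def by simp
        then have "real (card C) / nS \<le> 1 - 1 / nS" using nS by (simp add: field_simps)
        then have "(1 - \<alpha>) * (real (card C) / nS) \<le> (1 - \<alpha>) * (1 - 1 / nS)" using a by (intro mult_left_mono) auto
        then have "measure_pmf.prob (full_step lam mu t r s) Ak \<le> \<alpha> + (1 - \<alpha>) * (1 - 1 / nS)"
          using eq a by (simp add: indicator_def)
        also have "\<dots> = 1 - \<delta>" unfolding \<delta>_def using nS by (simp add: field_simps)
        finally show ?thesis using 2 unfolding A'_def Ek_def by simp
      next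
        case 3
        have "card C \<le> card S" using fC finite_servers unfolding S_def by (intro card_mono) auto
        then have "real (card C) / nS \<le> 1" using nS unfolding nS_def by simp
        then have "(1 - \<alpha>) * (real (card C) / nS) \<le> (1 - \<alpha>)" using a mult_left_le[of "real (card C) / nS" "1 - \<alpha>"] by simp
        then have "measure_pmf.prob (full_step lam mu t r s) Ak \<le> 1"
          using eq a by (simp add: indicator_def)
        then show ?thesis using 3 unfolding A'_def Ek_def by simp
      qed
    qed
    have "measure_pmf.prob \<pi> Ak = measure_pmf.expectation \<pi> (\<lambda>s. measure_pmf.prob (full_step lam mu t r s) Ak)"
      by (rule stationary_prob[OF st])
    also have "\<dots> \<le> measure_pmf.expectation \<pi> (\<lambda>s. 1 * indicator A' s + (1 - \<delta>) * indicator Ek s)"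
    proof (rule integral_mono)
      show "integrable (measure_pmf \<pi>) (\<lambda>s. measure_pmf.prob (full_step lam mu t r s) Ak)"
        by (rule pmf_integrable_bounded[where B=1]) simp
      show "integrable (measure_pmf \<pi>) (\<lambda>s. 1 * indicator A' s + (1 - \<delta>) * indicator Ek s :: real)"
        by (rule pmf_integrable_bounded[where B="1 + \<bar>1 - \<delta>\<bar>"]) (auto simp: indicator_def)
      show "\<And>s. s \<in> space (measure_pmf \<pi>) \<Longrightarrow> measure_pmf.prob (full_step lam mu t r s) Ak \<le> 1 * indicator A' s + (1 - \<delta>) * indicator Ek s"
        using pw by simp
    qed
    also have "\<dots> = measure_pmf.prob \<pi> A' + (1 - \<delta>) * measure_pmf.prob \<pi> Ek"
      by (simp only: expectation_ind2)
    finally have le: "measure_pmf.prob \<pi> Ak \<le> measure_pmf.prob \<pi> A' + (1 - \<delta>) * measure_pmf.prob \<pi> Ek" .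
    have "Ak = A' \<union> Ek" "A' \<inter> Ek = {}" unfolding Ak_def A'_def Ek_def by auto
    then have "measure_pmf.prob \<pi> Ak = measure_pmf.prob \<pi> A' + measure_pmf.prob \<pi> Ek"
      by (simp add: measure_pmf.finite_measure_Union)
    then have "\<delta> * measure_pmf.prob \<pi> Ek \<le> 0" using le by (simp add: algebra_simps)
    then have "measure_pmf.prob \<pi> Ek \<le> 0" using \<delta> by (simp add: mult_le_0_iff)
    then show ?thesis unfolding Ek_def using measure_nonneg[of "measure_pmf \<pi>"] by (meson order_antisym)
  qed
  show ?thesis
  proof
    fix s assume s: "s \<in> set_pmf \<pi>"
    show "good s"
    proof (rule ccontr)
      assume "\<not> good s"
      then have k: "bpot s \<ge> 1" using bpot_0_iff[of s] by linarith
      have "pmf \<pi> s \<le> measure_pmf.prob \<pi> {x. bpot x = bpot s}"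
        by (simp add: measure_pmf_single[symmetric] measure_pmf.finite_measure_mono)
      then have "pmf \<pi> s \<le> 0" using zero[OF k] by simp
      moreover have "pmf \<pi> s > 0" using s by (simp add: pmf_positive)
      ultimately show False by simp
    qed
  qed
qed

lemma expectation_ind3:
  fixes c1 c2 c3 :: real
  shows "measure_pmf.expectation M (\<lambda>s. c1 * indicator A s + c2 * indicator B s + c3 * indicator C s)
    = c1 * measure_pmf.prob M A + c2 * measure_pmf.prob M B + c3 * measure_pmf.prob M C"
proof -
  have i1: "integrable (measure_pmf M) (\<lambda>s. c1 * indicator A s + c2 * indicator B s :: real)"
    by (rule pmf_integrable_bounded[where B="\<bar>c1\<bar> + \<bar>c2\<bar>"]) (simp add: abs_mult indicator_def abs_triangle_ineq)
  have i2: "integrable (measure_pmf M) (\<lambda>s. c3 * indicator C s :: real)"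
    by (rule pmf_integrable_bounded[where B="\<bar>c3\<bar>"]) (simp add: abs_mult indicator_def)
  show ?thesis
    by (simp only: Bochner_Integration.integral_add[OF i1 i2] expectation_ind2)
       (simp add: pmf_expectation_indicator)
qed

lemma stationary_cut:
  assumes lam: "lam > 0" and mu: "mu > 0" and st: "stationary lam mu t r \<pi>"
    and gd: "\<forall>s\<in>set_pmf \<pi>. good s"
  shows "lam * measure_pmf.prob \<pi> {s. length s = n}
          \<le> mu * real (t + 1) * measure_pmf.prob \<pi> {s. length s = Suc n}"
proof -
  define \<alpha> where "\<alpha> = alph lam mu t r"
  define S where "S = servers t r"
  define nS where "nS = real (card S)"
  define q where "q = real (t + 1) / nS"
  have a: "0 < \<alpha>" "\<alpha> < 1" using alph_bounds[OF lam mu] unfolding \<alpha>_def by auto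
  have nS: "nS \<ge> 1" unfolding nS_def S_def card_servers_real by simp
  define Ln where "Ln = {s::state. length s \<le> n}"
  define L' where "L' = {s::state. length s < n}"
  define En where "En = {s::state. length s = n}"
  define E1 where "E1 = {s::state. length s = Suc n}"
  have pw: "measure_pmf.prob (full_step lam mu t r s) Ln
      \<le> 1 * indicator L' s + (1 - \<alpha>) * indicator En s + ((1 - \<alpha>) * q) * indicator E1 s"
    if gs: "good s" for s
  proof -
    define C where "C = {v \<in> S. serve r v s \<in> Ln}"
    have fC: "finite C" "C \<subseteq> S" unfolding C_def S_def using finite_servers by auto
    have eq: "measure_pmf.prob (full_step lam mu t r s) Ln = \<alpha> * indicator Ln (s @ [{}]) + (1 - \<alpha>) * (real (card C) / nS)"
      unfolding prob_full_step[OF lam mu] \<alpha>_def C_def S_def nS_def by simp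
    have cS: "real (card C) / nS \<le> 1"
    proof -
      have "card C \<le> card S" using fC finite_servers unfolding S_def by (intro card_mono) auto
      then show ?thesis using nS unfolding nS_def by simp
    qed
    consider "length s < n" | "length s = n" | "length s = Suc n" | "length s \<ge> Suc (Suc n)" by linarith
    then show ?thesis
    proof cases
      case 1
      have "measure_pmf.prob (full_step lam mu t r s) Ln \<le> 1" by simp
      then show ?thesis using 1 unfolding L'_def En_def E1_def by simp
    next
      case 2
      have "(1 - \<alpha>) * (real (card C) / nS) \<le> (1 - \<alpha>)" using a cS mult_left_le[of "real (card C) / nS" "1 - \<alpha>"] by simp
      then show ?thesis using 2 eq unfolding L'_def En_def E1_def Ln_def by simp
    next
      case 3
      have "C \<subseteq> {v \<in> servers t r. departs r v s \<noteq> None}"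
        unfolding C_def S_def Ln_def using 3 by (auto simp: length_serve split: if_splits)
      then have "card C \<le> card {v \<in> servers t r. departs r v s \<noteq> None}"
        using finite_servers by (intro card_mono) auto
      also have "\<dots> \<le> t + 1" by (rule card_departs[OF gs])
      finally have "real (card C) \<le> real (t + 1)" by linarith
      then have "real (card C) / nS \<le> q" unfolding q_def using nS by (simp add: divide_right_mono)
      then have "(1 - \<alpha>) * (real (card C) / nS) \<le> (1 - \<alpha>) * q" using a by (intro mult_left_mono) auto
      then show ?thesis using 3 eq unfolding L'_def En_def E1_def Ln_def by simp
    next
      case 4
      have "C = {}" unfolding C_def Ln_def using 4 by (auto simp: length_serve split: if_splits)
      then show ?thesis using 4 eq unfolding L'_def En_def E1_def Ln_def by simp
    qed
  qed
  have "measure_pmf.prob \<pi> Ln = measure_pmf.expectation \<pi> (\<lambda>s. measure_pmf.prob (full_step lam mu t r s) Ln)"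
    by (rule stationary_prob[OF st])
  also have "\<dots> \<le> measure_pmf.expectation \<pi> (\<lambda>s. 1 * indicator L' s + (1 - \<alpha>) * indicator En s + ((1 - \<alpha>) * q) * indicator E1 s)"
  proof (rule integral_mono_AE)
    show "integrable (measure_pmf \<pi>) (\<lambda>s. measure_pmf.prob (full_step lam mu t r s) Ln)"
      by (rule pmf_integrable_bounded[where B=1]) simp
    show "integrable (measure_pmf \<pi>) (\<lambda>s. 1 * indicator L' s + (1 - \<alpha>) * indicator En s + ((1 - \<alpha>) * q) * indicator E1 s :: real)"
      by (rule pmf_integrable_bounded[where B="1 + \<bar>1 - \<alpha>\<bar> + \<bar>(1 - \<alpha>) * q\<bar>"]) (auto simp: indicator_def)
    show "AE s in measure_pmf \<pi>. measure_pmf.prob (full_step lam mu t r s) Ln \<le> 1 * indicator L' s + (1 - \<alpha>) * indicator En s + ((1 - \<alpha>) * q) * indicator E1 s"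
      using gd pw by (intro AE_pmfI) auto
  qed
  also have "\<dots> = measure_pmf.prob \<pi> L' + (1 - \<alpha>) * measure_pmf.prob \<pi> En + ((1 - \<alpha>) * q) * measure_pmf.prob \<pi> E1"
    by (simp only: expectation_ind3)
  finally have le: "measure_pmf.prob \<pi> Ln \<le> measure_pmf.prob \<pi> L' + (1 - \<alpha>) * measure_pmf.prob \<pi> En + ((1 - \<alpha>) * q) * measure_pmf.prob \<pi> E1" .
  have "Ln = L' \<union> En" "L' \<inter> En = {}" unfolding Ln_def L'_def En_def by auto
  then have "measure_pmf.prob \<pi> Ln = measure_pmf.prob \<pi> L' + measure_pmf.prob \<pi> En"
    by (simp add: measure_pmf.finite_measure_Union)
  then have key: "\<alpha> * measure_pmf.prob \<pi> En \<le> (1 - \<alpha>) * q * measure_pmf.prob \<pi> E1"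
    using le by (simp add: algebra_simps)
  define D where "D = lam + mu * real (1 + t * r)"
  have D: "D > 0" unfolding D_def using lam mu by (simp add: add_pos_nonneg)
  have nSr: "nS = real (1 + t * r)" unfolding nS_def S_def by (simp add: card_servers)
  have al: "\<alpha> = lam / D" unfolding \<alpha>_def alph_def D_def by simp
  have D': "D = lam + mu * nS" unfolding D_def nSr ..
  have h1: "1 - \<alpha> = mu * nS / D" unfolding al using D D' by (simp add: field_simps)
  have al1: "(1 - \<alpha>) * q = mu * real (t + 1) / D"
    unfolding h1 q_def using nS D by (simp add: field_simps)
  from key have "lam / D * measure_pmf.prob \<pi> En \<le> mu * real (t + 1) / D * measure_pmf.prob \<pi> E1"
    unfolding al1 by (simp add: al)
  then have "lam * measure_pmf.prob \<pi> En \<le> mu * real (t + 1) * measure_pmf.prob \<pi> E1"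
    using D by (simp add: divide_le_cancel field_simps)
  then show ?thesis unfolding En_def E1_def .
qed

fun gk :: "real \<Rightarrow> nat \<Rightarrow> nat \<Rightarrow> real" where
  "gk q 0 m = (if m = 0 then 0 else 1)"
| "gk q (Suc k) m = (if m = 0 then 0 else q * gk q k (m - 1) + (1 - q) * gk q k m)"

lemma gk_bounds: "0 \<le> q \<Longrightarrow> q \<le> 1 \<Longrightarrow> 0 \<le> gk q k m \<and> gk q k m \<le> 1"
proof (induction k arbitrary: m)
  case 0 then show ?case by simp
next
  case (Suc k)
  have a: "0 \<le> gk q k (m - 1)" "gk q k (m - 1) \<le> 1" "0 \<le> gk q k m" "gk q k m \<le> 1" using Suc by auto
  have "q * gk q k (m - 1) + (1 - q) * gk q k m \<le> q * 1 + (1 - q) * 1"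
    using a Suc.prems by (intro add_mono mult_left_mono) auto
  moreover have "0 \<le> q * gk q k (m - 1) + (1 - q) * gk q k m" using a Suc.prems by simp
  ultimately show ?case by simp
qed

lemma gk_0 [simp]: "gk q k 0 = 0"
  by (cases k) auto

lemma gk_mono_Suc: "0 \<le> q \<Longrightarrow> q \<le> 1 \<Longrightarrow> gk q k m \<le> gk q k (Suc m)"
proof (induction k arbitrary: m)
  case 0 then show ?case by simp
next
  case (Suc k)
  show ?case
  proof (cases m)
    case 0 then show ?thesis using gk_bounds[OF Suc.prems, of "Suc k" "Suc 0"] by simp
  next
    case (Suc m')
    have "q * gk q k m' + (1 - q) * gk q k (Suc m') \<le> q * gk q k (Suc m') + (1 - q) * gk q k (Suc (Suc m'))"
      using Suc.IH[OF Suc.prems, of m'] Suc.IH[OF Suc.prems, of "Suc m'"] Suc.prems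
      by (intro add_mono mult_left_mono) auto
    then show ?thesis using Suc by simp
  qed
qed

lemma gk_mono: "0 \<le> q \<Longrightarrow> q \<le> 1 \<Longrightarrow> m \<le> m' \<Longrightarrow> gk q k m \<le> gk q k m'"
  using lift_Suc_mono_le[of "gk q k", OF gk_mono_Suc] by blast

lemma tag_iter_0: "tag_iter t r 0 s = return_pmf s"
  unfolding tag_iter_def by simp

lemma tag_iter_Suc: "tag_iter t r (Suc k) s = bind_pmf (tag_kernel t r s) (tag_iter t r k)"
proof (induction k arbitrary: s)
  case 0
  show ?case unfolding tag_iter_def by (simp add: bind_return_pmf bind_return_pmf')
next
  case (Suc k)
  have "tag_iter t r (Suc (Suc k)) s = bind_pmf (tag_iter t r (Suc k) s) (tag_kernel t r)"
    unfolding tag_iter_def by simp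
  also have "\<dots> = bind_pmf (bind_pmf (tag_kernel t r s) (tag_iter t r k)) (tag_kernel t r)"
    by (simp only: Suc.IH)
  also have "\<dots> = bind_pmf (tag_kernel t r s) (\<lambda>s'. bind_pmf (tag_iter t r k s') (tag_kernel t r))"
    by (rule bind_assoc_pmf)
  also have "\<dots> = bind_pmf (tag_kernel t r s) (tag_iter t r (Suc k))"
    unfolding tag_iter_def by simp
  finally show ?case .
qed

definition alive :: "nat \<Rightarrow> nat \<Rightarrow> nat \<Rightarrow> state option \<Rightarrow> real" where
  "alive t r k s = measure_pmf.prob (tag_iter t r k s) (range Some)"

lemma alive_Suc:
  "alive t r (Suc k) s = (\<Sum>v\<in>servers t r. alive t r k (tag_step r v s)) / real (card (servers t r))"
  unfolding alive_def tag_iter_Suc prob_bind_pmf tag_kernel_def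
  by (simp add: integral_pmf_of_set[OF servers_ne finite_servers])

lemma alive_tag:
  fixes t r k :: nat and xs :: state
  assumes r: "r \<ge> 1"
  defines "q \<equiv> real (t + 1) / real (card (servers t r))"
  shows "good xs \<Longrightarrow> xs \<in> valid_states t r \<Longrightarrow> xs \<noteq> [] \<Longrightarrow> gk q k (length xs) \<le> alive t r k (Some xs)"
proof (induction k arbitrary: xs)
  have nS: "real (card (servers t r)) = 1 + real t * real r" by (rule card_servers_real)
  have "real t * 1 \<le> real t * real r" using r by (intro mult_left_mono) auto
  then have "real (t + 1) \<le> 1 + real t * real r" by simp
  then have q: "0 \<le> q" "q \<le> 1" unfolding q_def nS by auto
  {
    case 0
    have "gk q 0 (length xs) \<le> 1" using gk_bounds[OF q] by blast
    then show ?case unfolding alive_def tag_iter_0 by simp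
  next
    case (Suc k)
    define m where "m = length xs"
    define S where "S = servers t r"
    define D where "D = {v \<in> S. departs r v xs \<noteq> None}"
    define a where "a = gk q k (m - 1)"
    define b where "b = gk q k m"
    have ab: "a \<le> b" unfolding a_def b_def by (rule gk_mono[OF q]) simp
    have m1: "m \<ge> 1" using Suc.prems unfolding m_def by (cases xs) auto
    have each: "(if v \<in> D then a else b) \<le> alive t r k (tag_step r v (Some xs))" if v: "v \<in> S" for v
    proof (cases "departs r v xs = Some (length xs - 1)")
      case True
      have "length xs = 1" using tag_head[OF Suc.prems(1,2) _ True] v unfolding S_def by simp
      moreover have "v \<in> D" using True v unfolding D_def by simp
      ultimately show ?thesis unfolding a_def m_def alive_def by simp
    next
      case False
      then have ts: "tag_step r v (Some xs) = Some (serve r v xs)" unfolding tag_step_def by simp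
      have g': "good (serve r v xs)" using good_serve[OF Suc.prems(1)] .
      have v': "serve r v xs \<in> valid_states t r" using valid_serve[OF _ Suc.prems(2)] v unfolding S_def by simp
      show ?thesis
      proof (cases "v \<in> D")
        case True
        then obtain i where i: "departs r v xs = Some i" unfolding D_def by auto
        have "i < length xs" by (rule departs_lt[OF i])
        then have "i < length xs - 1" using False i by auto
        then have len: "length (serve r v xs) = m - 1" "m - 1 \<noteq> 0" using i unfolding m_def by (auto simp: length_serve)
        then have "serve r v xs \<noteq> []" by auto
        then have "gk q k (length (serve r v xs)) \<le> alive t r k (Some (serve r v xs))"
          using Suc.IH[OF g' v'] by simp
        then show ?thesis using True len ts unfolding a_def by simp
      next
        case nD: False
        then have "departs r v xs = None" using v unfolding D_def by auto
        then have len: "length (serve r v xs) = m" unfolding m_def by (simp add: length_serve)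
        then have "serve r v xs \<noteq> []" using m1 by auto
        then have "gk q k (length (serve r v xs)) \<le> alive t r k (Some (serve r v xs))"
          using Suc.IH[OF g' v'] by simp
        then show ?thesis using nD len ts unfolding b_def by simp
      qed
    qed
    have fS: "finite S" unfolding S_def by (rule finite_servers)
    have DS: "D \<subseteq> S" unfolding D_def by auto
    have "(\<Sum>v\<in>S. (if v \<in> D then a else b)) \<le> (\<Sum>v\<in>S. alive t r k (tag_step r v (Some xs)))"
      by (rule sum_mono) (rule each)
    moreover have "(\<Sum>v\<in>S. (if v \<in> D then a else b)) = real (card D) * a + real (card S - card D) * b"
    proof -
      have "(\<Sum>v\<in>S. (if v \<in> D then a else b)) = (\<Sum>v\<in>S \<inter> D. a) + (\<Sum>v\<in>S - D. b)"
        using fS by (simp add: sum.If_cases Diff_eq)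
      also have "\<dots> = real (card D) * a + real (card S - card D) * b"
        using DS fS by (simp add: Int_absorb1 card_Diff_subset finite_subset)
      finally show ?thesis .
    qed
    ultimately have sumle: "real (card D) * a + real (card S - card D) * b \<le> (\<Sum>v\<in>S. alive t r k (tag_step r v (Some xs)))"
      by simp
    have cD: "card D \<le> t + 1" unfolding D_def S_def by (rule card_departs[OF Suc.prems(1)])
    have cDS: "card D \<le> card S" using DS fS by (rule card_mono[rotated])
    define nS where "nS = real (card S)"
    have nS1: "nS \<ge> 1" unfolding nS_def S_def nS by simp
    have qnS: "q = real (t + 1) / nS" unfolding q_def nS_def S_def ..
    have "real (card D) * a + real (card S - card D) * b = nS * b - real (card D) * (b - a)"
      using cDS unfolding nS_def by (simp add: of_nat_diff algebra_simps)
    also have "\<dots> \<ge> nS * b - real (t + 1) * (b - a)"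
      using cD ab by (intro diff_left_mono mult_right_mono) auto
    finally have "nS * b - real (t + 1) * (b - a) \<le> (\<Sum>v\<in>S. alive t r k (tag_step r v (Some xs)))"
      using sumle by linarith
    then have "(nS * b - real (t + 1) * (b - a)) / nS \<le> (\<Sum>v\<in>S. alive t r k (tag_step r v (Some xs))) / nS"
      using nS1 by (intro divide_right_mono) auto
    moreover have "(nS * b - real (t + 1) * (b - a)) / nS = q * a + (1 - q) * b"
      unfolding qnS using nS1 by (simp add: field_simps)
    moreover have "gk q (Suc k) (length xs) = q * a + (1 - q) * b"
      using m1 unfolding a_def b_def m_def by simp
    ultimately show ?case unfolding alive_Suc nS_def S_def by simp
  }
qed

theorem lemma6:
  fixes lam mu x :: real and t r :: nat and \<pi> :: "state pmf"
  assumes "lam > 0" and "mu > 0" and "t \<ge> 1" and "r \<ge> 1"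
    and "lam < (real t + 1) * mu"
    and "set_pmf \<pi> \<subseteq> valid_states t r"
    and "stationary lam mu t r \<pi>"
    and "x \<ge> 0"
  shows "download_tail mu t r \<pi> x \<ge> exp (- (((real t + 1) * mu - lam) * x))"
proof -
  note lam = assms(1) and mu = assms(2) and r = assms(4) and stab = assms(5)
    and val = assms(6) and st = assms(7) and x = assms(8)
  define S where "S = servers t r"
  define nS where "nS = real (card S)"
  have nSr: "nS = 1 + real t * real r" unfolding nS_def S_def by (rule card_servers_real)
  define q where "q = real (t + 1) / nS"
  have "real t * 1 \<le> real t * real r" using r by (intro mult_left_mono) auto
  then have tn: "real (t + 1) \<le> nS" unfolding nSr by simp
  have nS1: "nS \<ge> 1" unfolding nSr by simp
  have q: "0 \<le> q" "q \<le> 1" unfolding q_def using tn nS1 by auto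
  have mt: "mu * real (t + 1) > 0" using mu by simp
  define \<rho> where "\<rho> = lam / (mu * real (t + 1))"
  have stab': "lam < mu * real (t + 1)" using stab by (simp add: algebra_simps)
  have \<rho>: "0 \<le> \<rho>" "\<rho> < 1" unfolding \<rho>_def using lam mt stab' by (auto simp: divide_less_eq)
  define c where "c = q * \<rho> + (1 - q)"
  have c0: "c \<ge> 0" unfolding c_def using q \<rho> by simp
  define P where "P = map_pmf length \<pi>"
  have gd: "\<forall>s\<in>set_pmf \<pi>. good s" by (rule stationary_good[OF lam mu st])
  have pP: "pmf P n = measure_pmf.prob \<pi> {s. length s = n}" for n
    unfolding P_def pmf_map by (simp add: vimage_def)
  have rec: "\<rho> * pmf P n \<le> pmf P (Suc n)" for n
  proof -
    have "lam * pmf P n \<le> mu * real (t + 1) * pmf P (Suc n)"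
      unfolding pP by (rule stationary_cut[OF lam mu st gd])
    then show ?thesis unfolding \<rho>_def using mt by (simp add: field_simps)
  qed
  define G where "G k = measure_pmf.expectation P (\<lambda>n. gk q k (Suc n))" for k
  have gb: "\<bar>gk q k m\<bar> \<le> 1" for k m using gk_bounds[OF q, of k m] by simp
  have Gc: "c ^ k \<le> G k" for k
  proof (induction k)
    case 0 then show ?case unfolding G_def by simp
  next
    case (Suc k)
    have i1: "integrable (measure_pmf P) (\<lambda>n. q * gk q k n)"
      by (rule pmf_integrable_bounded[where B="\<bar>q\<bar>"]) (simp add: abs_mult gb mult_left_le)
    have i2: "integrable (measure_pmf P) (\<lambda>n. (1 - q) * gk q k (Suc n))"
      by (rule pmf_integrable_bounded[where B="\<bar>1 - q\<bar>"]) (simp add: abs_mult gb mult_left_le)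
    have "G (Suc k) = measure_pmf.expectation P (\<lambda>n. q * gk q k n + (1 - q) * gk q k (Suc n))"
      unfolding G_def by simp
    also have "\<dots> = q * measure_pmf.expectation P (gk q k) + (1 - q) * G k"
      unfolding G_def by (simp add: Bochner_Integration.integral_add[OF i1 i2])
    finally have GS: "G (Suc k) = q * measure_pmf.expectation P (gk q k) + (1 - q) * G k" .
    have "\<rho> * G k \<le> measure_pmf.expectation P (gk q k)"
      unfolding G_def
      by (rule shift_ineq[OF gb]) (use gk_bounds[OF q] \<rho> rec in auto)
    then have "q * (\<rho> * G k) \<le> q * measure_pmf.expectation P (gk q k)" using q by (intro mult_left_mono) auto
    then have "c * G k \<le> G (Suc k)" unfolding GS c_def by (simp add: algebra_simps)
    moreover have "c * c ^ k \<le> c * G k" using Suc.IH c0 by (intro mult_left_mono) auto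
    ultimately show ?case by simp
  qed
  define L where "L = mu * real (1 + t * r)"
  define a where "a = L * x"
  have a0: "a \<ge> 0" unfolding a_def L_def using mu x by simp
  define w where "w k = exp (- L * x) * (L * x) ^ k / fact k" for k
  have w0: "w k \<ge> 0" for k unfolding w_def using a0 a_def by simp
  have wsums: "w sums (exp (- a) * exp a)"
  proof -
    have "(\<lambda>n. exp (- a) * (a ^ n /\<^sub>R fact n)) sums (exp (- a) * exp a)"
      by (rule sums_mult[OF exp_converges])
    moreover have "(\<lambda>n. exp (- a) * (a ^ n /\<^sub>R fact n)) = w"
      by (rule ext) (simp add: w_def a_def field_simps)
    ultimately show ?thesis by simp
  qed
  then have wsum: "summable w" by (rule sums_summable)
  define TS where "TS xs = tag_survival mu t r xs x" for xs
  have TSeq: "TS xs = (\<Sum>k. w k * alive t r k (Some (xs @ [{}])))" for xs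
    unfolding TS_def tag_survival_def w_def alive_def L_def Let_def by simp
  have summ: "summable (\<lambda>k. w k * alive t r k (Some (xs @ [{}])))" for xs
  proof (rule summable_comparison_test'[OF wsum])
    fix n
    have "alive t r n (Some (xs @ [{}])) \<le> 1" "0 \<le> alive t r n (Some (xs @ [{}]))" unfolding alive_def by auto
    then show "norm (w n * alive t r n (Some (xs @ [{}]))) \<le> w n"
      using w0[of n] by (simp add: abs_mult mult_left_le)
  qed
  have TSb: "\<bar>TS xs\<bar> \<le> suminf w" for xs
  proof -
    have "0 \<le> TS xs" unfolding TSeq using summ w0 by (intro suminf_nonneg) (auto simp: alive_def)
    moreover have "TS xs \<le> suminf w" unfolding TSeq
    proof (rule suminf_le[OF _ summ wsum])
      fix n
      have "alive t r n (Some (xs @ [{}])) \<le> 1" unfolding alive_def by auto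
      then show "w n * alive t r n (Some (xs @ [{}])) \<le> w n" using w0[of n] by (simp add: mult_left_le)
    qed
    ultimately show ?thesis by simp
  qed
  have partial: "(\<Sum>k<K. w k * c ^ k) \<le> download_tail mu t r \<pi> x" for K
  proof -
    have pw: "(\<Sum>k<K. w k * gk q k (Suc (length xs))) \<le> TS xs" if xs: "xs \<in> set_pmf \<pi>" for xs
    proof -
      have g': "good (xs @ [{}])" using gd xs good_snoc by blast
      have v': "xs @ [{}] \<in> valid_states t r" using val xs valid_snoc[OF r] by blast
      have "(\<Sum>k<K. w k * gk q k (Suc (length xs))) \<le> (\<Sum>k<K. w k * alive t r k (Some (xs @ [{}])))"
      proof (rule sum_mono)
        fix k
        have "gk q k (length (xs @ [{}])) \<le> alive t r k (Some (xs @ [{}]))"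
          using alive_tag[OF r g' v'] unfolding q_def nS_def S_def by simp
        then show "w k * gk q k (Suc (length xs)) \<le> w k * alive t r k (Some (xs @ [{}]))"
          using w0[of k] by (intro mult_left_mono) auto
      qed
      also have "\<dots> \<le> TS xs" unfolding TSeq
        by (rule sum_le_suminf[OF summ]) (auto simp: alive_def w0)
      finally show ?thesis .
    qed
    have ik: "integrable (measure_pmf \<pi>) (\<lambda>xs. w k * gk q k (Suc (length xs)))" for k
      by (rule pmf_integrable_bounded[where B="w k"]) (simp add: abs_mult gb w0 mult_left_le)
    have "(\<Sum>k<K. w k * c ^ k) \<le> (\<Sum>k<K. w k * G k)"
      by (rule sum_mono) (use Gc w0 in \<open>auto intro: mult_left_mono\<close>)
    also have "\<dots> = measure_pmf.expectation \<pi> (\<lambda>xs. \<Sum>k<K. w k * gk q k (Suc (length xs)))"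
      by (subst Bochner_Integration.integral_sum[OF ik]) (simp add: G_def P_def)
    also have "\<dots> \<le> measure_pmf.expectation \<pi> TS"
    proof (rule integral_mono_AE)
      show "integrable (measure_pmf \<pi>) (\<lambda>xs. \<Sum>k<K. w k * gk q k (Suc (length xs)))"
        using ik by simp
      show "integrable (measure_pmf \<pi>) TS" by (rule pmf_integrable_bounded[OF TSb])
      show "AE xs in measure_pmf \<pi>. (\<Sum>k<K. w k * gk q k (Suc (length xs))) \<le> TS xs"
        by (rule AE_pmfI) (rule pw)
    qed
    also have "\<dots> = download_tail mu t r \<pi> x" unfolding download_tail_def TS_def ..
    finally show ?thesis .
  qed
  have lim: "(\<lambda>K. \<Sum>k<K. w k * c ^ k) \<longlonglongrightarrow> exp (- a) * exp (a * c)"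
  proof -
    have s: "(\<lambda>n. exp (- a) * ((a * c) ^ n /\<^sub>R fact n)) sums (exp (- a) * exp (a * c))"
      by (rule sums_mult[OF exp_converges])
    have eq: "(\<lambda>n. exp (- a) * ((a * c) ^ n /\<^sub>R fact n)) = (\<lambda>k. w k * c ^ k)"
      unfolding w_def a_def by (auto simp: power_mult_distrib divide_inverse)
    show ?thesis using s[unfolded eq] unfolding sums_def .
  qed
  have "exp (- a) * exp (a * c) \<le> download_tail mu t r \<pi> x"
    using lim partial by (intro LIMSEQ_le_const2) auto
  moreover have "exp (- a) * exp (a * c) = exp (- (((real t + 1) * mu - lam) * x))"
  proof -
    have LnS: "L = mu * nS" unfolding L_def nSr by simp
    have "nS \<noteq> 0" using nS1 by simp
    then have Lq: "L * q = mu * real (t + 1)" unfolding LnS q_def by simp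
    have "- a + a * c = - (a * q * (1 - \<rho>))" unfolding c_def by (simp add: algebra_simps)
    also have "a * q * (1 - \<rho>) = x * (mu * real (t + 1) - mu * real (t + 1) * \<rho>)"
    proof -
      have "a * q * (1 - \<rho>) = x * (L * q) * (1 - \<rho>)" unfolding a_def by (simp add: algebra_simps)
      also have "\<dots> = x * (mu * real (t + 1)) * (1 - \<rho>)" unfolding Lq ..
      finally show ?thesis by (simp add: algebra_simps)
    qed
    also have "mu * real (t + 1) * \<rho> = lam" unfolding \<rho>_def using mt mu by simp
    finally have "- a + a * c = - (((real t + 1) * mu - lam) * x)" by (simp add: algebra_simps)
    then show ?thesis by (simp add: exp_add[symmetric])
  qed
  ultimately show ?thesis by simp
qed


end
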